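(* In the online ADDIS setting of the context, assume the $p$-values $P_1,P_2,\dots$ are independent, let $T\in\mathbb N$ and let $g:\{0,1\}^T\to\mathbb R$ be coordinatewise nondecreasing. Assume $\alpha_t$, $\lambda_t$ and $1-\tau_t$ are monotonic functions of the past for all $t$, and $\alpha_t\le\lambda_t<\tau_t$ for all $t$. Then for any $t\le T$ with $t\in\mathcal H_0$ whose null $p$-value is conditionally uniformly conservative, $$\mathbb E\Big[\frac{\alpha_t\mathbf 1\{\lambda_t<P_t\le\tau_t\}}{(\tau_t-\lambda_t)(g(R_{1:T})\vee1)}\,\Big|\,\mathcal F^{t-1},S_t=1\Big]\ \ge\ \mathbb E\Big[\frac{\alpha_t}{\tau_t(g(R_{1:T})\vee1)}\,\Big|\,\mathcal F^{t-1},S_t=1\Big]\ \ge\ \mathbb E\Big[\frac{\mathbf 1\{P_t\le\alpha_t\}}{g(R_{1:T})\vee1}\,\Big|\,\mathcal F^{t-1},S_t=1\Big].$$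
   Context: Let $P_1,P_2,\dots$ be $p$-values, $\mathcal H_0\subseteq\mathbb N$ the set of true null indices. Sequences $\{\alpha_j\},\{\lambda_j\},\{\tau_j\}$ in $[0,1]$ define $S_j=\mathbf 1\{P_j\le\tau_j\}$, $C_j=\mathbf 1\{P_j\le\lambda_j\}$, $R_j=\mathbf 1\{P_j\le\alpha_j\}$; $R_{1:T}=(R_1,\dots,R_T)$; $\mathcal F^t=\sigma(R_{1:t},C_{1:t},S_{1:t})$, $\mathcal F^0$ trivial; $\alpha_t,\lambda_t,\tau_t$ are deterministic functions of $(R_{1:t-1},C_{1:t-1},S_{1:t-1})$. Such a function is a monotonic function of the past if it is coordinatewise nondecreasing in each $R_i$ and $C_i$ and coordinatewise nonincreasing in each $S_i$. The null $p$-value $P_t$ is conditionally uniformly conservative if for all $x,\tau\in(0,1)$, $\Pr(P_t/\tau\le x\mid P_t\le\tau,\mathcal F^{t-1})\le x$. *)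

theory Defs
  imports "HOL-Probability.Probability"
begin

type_synonym level_fn = "nat \<Rightarrow> bool list \<Rightarrow> bool list \<Rightarrow> bool list \<Rightarrow> real"

text \<open>hist al la ta p n = (R_{1:n}, C_{1:n}, S_{1:n}) for the realisation p of the p-values
  (p-values are indexed from 1).\<close>
fun hist :: "level_fn \<Rightarrow> level_fn \<Rightarrow> level_fn \<Rightarrow> (nat \<Rightarrow> real) \<Rightarrow> nat
              \<Rightarrow> bool list \<times> bool list \<times> bool list" where
  "hist al la ta p 0 = ([], [], [])"
| "hist al la ta p (Suc n) =
     (case hist al la ta p n of (r, c, s) \<Rightarrow>
        (r @ [p (Suc n) \<le> al (Suc n) r c s],
         c @ [p (Suc n) \<le> la (Suc n) r c s],
         s @ [p (Suc n) \<le> ta (Suc n) r c s]))"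

definition lev :: "level_fn \<Rightarrow> level_fn \<Rightarrow> level_fn \<Rightarrow> level_fn \<Rightarrow> (nat \<Rightarrow> real) \<Rightarrow> nat \<Rightarrow> real" where
  "lev al la ta f p t = (case hist al la ta p (t - 1) of (r, c, s) \<Rightarrow> f t r c s)"

definition mono_past :: "level_fn \<Rightarrow> nat \<Rightarrow> bool" where
  "mono_past f t \<longleftrightarrow>
     (\<forall>r r' c c' s s'. length r = t - 1 \<and> length c = t - 1 \<and> length s = t - 1 \<and>
        list_all2 (\<le>) r r' \<and> list_all2 (\<le>) c c' \<and> list_all2 (\<le>) s' s
        \<longrightarrow> f t r c s \<le> f t r' c' s')"

text \<open>F^{t-1} = sigma(R_{1:t-1}, C_{1:t-1}, S_{1:t-1}), jointly with an extra indicator E.\<close>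
definition past_with :: "'a measure \<Rightarrow> (nat \<Rightarrow> 'a \<Rightarrow> real) \<Rightarrow> level_fn \<Rightarrow> level_fn \<Rightarrow> level_fn
                         \<Rightarrow> nat \<Rightarrow> ('a \<Rightarrow> bool) \<Rightarrow> 'a measure" where
  "past_with M P al la ta t E =
     vimage_algebra (space M) (\<lambda>\<omega>. (hist al la ta (\<lambda>j. P j \<omega>) (t - 1), E \<omega>)) (count_space UNIV)"

text \<open>The null p-value P_t is conditionally uniformly conservative:
  Pr(P_t/tau \<le> x | P_t \<le> tau, F^{t-1}) \<le> x for all x, tau in (0,1).\<close>
definition cond_unif_conservative :: "'a measure \<Rightarrow> (nat \<Rightarrow> 'a \<Rightarrow> real) \<Rightarrow> level_fn \<Rightarrow> level_fn
                                      \<Rightarrow> level_fn \<Rightarrow> nat \<Rightarrow> bool" where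
  "cond_unif_conservative M P al la ta t \<longleftrightarrow>
     (\<forall>x \<tau>::real. 0 < x \<and> x < 1 \<and> 0 < \<tau> \<and> \<tau> < 1 \<longrightarrow>
        (AE \<omega> in M. P t \<omega> \<le> \<tau> \<longrightarrow>
           real_cond_exp M (past_with M P al la ta t (\<lambda>\<omega>. P t \<omega> \<le> \<tau>))
              (\<lambda>\<omega>. of_bool (P t \<omega> / \<tau> \<le> x)) \<omega> \<le> x))"

end

theory Submission
  imports Defs
begin



lemma hist_len: "hist al la ta p n = (r,c,s) \<Longrightarrow> length r = n \<and> length c = n \<and> length s = n"
  by (induction n arbitrary: r c s) (auto split: prod.splits)

lemma hist_cong: "(\<And>j. 1 \<le> j \<Longrightarrow> j \<le> n \<Longrightarrow> p j = p' j) \<Longrightarrow> hist al la ta p n = hist al la ta p' n"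
  by (induction n) (auto split: prod.splits)

definition hord :: "bool list \<times> bool list \<times> bool list \<Rightarrow> bool list \<times> bool list \<times> bool list \<Rightarrow> bool" where
  "hord x y = (case x of (r,c,s) \<Rightarrow> case y of (r',c',s') \<Rightarrow>
     list_all2 (\<le>) r r' \<and> list_all2 (\<le>) c c' \<and> list_all2 (\<le>) s' s)"

lemma hord_refl: "hord x x"
  by (auto simp: hord_def list_all2_refl split: prod.splits)

lemma hist_mono:
  assumes mono_al: "\<And>s. s \<ge> 1 \<Longrightarrow> mono_past al s"
    and mono_la: "\<And>s. s \<ge> 1 \<Longrightarrow> mono_past la s"
    and mono_ta: "\<And>s. s \<ge> 1 \<Longrightarrow> mono_past (\<lambda>k r c s. 1 - ta k r c s) s"
    and agree: "\<And>j. j \<noteq> t \<Longrightarrow> p j = p' j"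
    and h0: "hord (hist al la ta p t) (hist al la ta p' t)"
    and tn: "t \<le> n"
  shows "hord (hist al la ta p n) (hist al la ta p' n)"
  using tn
proof (induction n)
  case 0
  then show ?case using h0 by simp
next
  case (Suc n)
  show ?case
  proof (cases "t = Suc n")
    case True
    then show ?thesis using h0 by simp
  next
    case False
    then have tn: "t \<le> n" using Suc.prems by simp
    have IH: "hord (hist al la ta p n) (hist al la ta p' n)" using Suc.IH[OF tn] .
    obtain r c s where rcs: "hist al la ta p n = (r,c,s)" by (cases "hist al la ta p n") auto
    obtain r' c' s' where rcs': "hist al la ta p' n = (r',c',s')" by (cases "hist al la ta p' n") auto
    have len: "length r = n" "length c = n" "length s = n" using hist_len[OF rcs] by auto
    have o: "list_all2 (\<le>) r r'" "list_all2 (\<le>) c c'" "list_all2 (\<le>) s' s"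
      using IH rcs rcs' by (auto simp: hord_def)
    have pe: "p (Suc n) = p' (Suc n)" using agree False by metis
    have a: "al (Suc n) r c s \<le> al (Suc n) r' c' s'"
      using mono_al[of "Suc n"] len o unfolding mono_past_def by auto
    have l: "la (Suc n) r c s \<le> la (Suc n) r' c' s'"
      using mono_la[of "Suc n"] len o unfolding mono_past_def by auto
    have u: "1 - ta (Suc n) r c s \<le> 1 - ta (Suc n) r' c' s'"
      using mono_ta[of "Suc n"] len o unfolding mono_past_def by auto
    show ?thesis using rcs rcs' o a l u pe
      by (auto simp: hord_def intro!: list_all2_appendI)
  qed
qed


lemma "(F::'a\<Rightarrow>real) \<in> borel_measurable N \<Longrightarrow> (\<lambda>x. F x \<le> c) \<in> measurable N (count_space UNIV)" by measurable

lemma meas_bool3: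
  fixes b1 b2 b3 :: "'a \<Rightarrow> bool"
  assumes "b1 \<in> measurable N (count_space UNIV)" "b2 \<in> measurable N (count_space UNIV)" "b3 \<in> measurable N (count_space UNIV)"
  shows "(\<lambda>x. G (b1 x) (b2 x) (b3 x)) \<in> measurable N (count_space UNIV)"
proof (rule measurable_compose_countable'[where g=b1 and I=UNIV and f="\<lambda>v1 x. G v1 (b2 x) (b3 x)"])
  fix v1 show "(\<lambda>x. G v1 (b2 x) (b3 x)) \<in> measurable N (count_space UNIV)"
  proof (rule measurable_compose_countable'[where g=b2 and I=UNIV and f="\<lambda>v2 x. G v1 v2 (b3 x)"])
    fix v2 show "(\<lambda>x. G v1 v2 (b3 x)) \<in> measurable N (count_space UNIV)"
      by (rule measurable_compose_countable'[where g=b3 and I=UNIV and f="\<lambda>v3 x. G v1 v2 v3"]) (use assms in \<open>auto intro: countableI_type\<close>)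
  qed (use assms in \<open>auto intro: countableI_type\<close>)
qed (use assms in \<open>auto intro: countableI_type\<close>)

lemma hist_meas:
  assumes "\<And>j. 1 \<le> j \<Longrightarrow> j \<le> n \<Longrightarrow> (\<lambda>x. F x j) \<in> borel_measurable N"
  shows "(\<lambda>x. hist al la ta (F x) n) \<in> measurable N (count_space UNIV)"
  using assms
proof (induction n)
  case 0
  then show ?case by simp
next
  case (Suc n)
  have IH: "(\<lambda>x. hist al la ta (F x) n) \<in> measurable N (count_space UNIV)"
    using Suc by auto
  have Fm[measurable]: "(\<lambda>x. F x (Suc n)) \<in> borel_measurable N" using Suc.prems by auto
  have eq: "(\<lambda>x. hist al la ta (F x) (Suc n)) = (\<lambda>x. (\<lambda>h x. case h of (r,c,s) \<Rightarrow>
     (r @ [F x (Suc n) \<le> al (Suc n) r c s],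
         c @ [F x (Suc n) \<le> la (Suc n) r c s],
         s @ [F x (Suc n) \<le> ta (Suc n) r c s])) (hist al la ta (F x) n) x)"
    by simp
  show ?case unfolding eq
  proof (rule measurable_compose_countable'[OF _ IH])
    fix h :: "bool list \<times> bool list \<times> bool list"
    obtain r c s where h: "h = (r,c,s)" by (cases h) auto
    show "(\<lambda>x. case h of (r,c,s) \<Rightarrow>
     (r @ [F x (Suc n) \<le> al (Suc n) r c s],
         c @ [F x (Suc n) \<le> la (Suc n) r c s],
         s @ [F x (Suc n) \<le> ta (Suc n) r c s])) \<in> measurable N (count_space UNIV)"
      unfolding h prod.case
      by (rule meas_bool3[where G="\<lambda>b1 b2 b3. (r @ [b1], c @ [b2], s @ [b3])"]; measurable)
  qed auto
qed

lemma meas_cnt2: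
  fixes f1 :: "'a \<Rightarrow> 'b::countable" and f2 :: "'a \<Rightarrow> 'c::countable"
  assumes "f1 \<in> measurable N (count_space UNIV)" "f2 \<in> measurable N (count_space UNIV)"
    and "\<And>a b. (\<lambda>x. \<phi> a b x) \<in> borel_measurable N"
  shows "(\<lambda>x. \<phi> (f1 x) (f2 x) x) \<in> borel_measurable N"
proof (rule measurable_compose_countable'[where g=f1 and I=UNIV and f="\<lambda>a x. \<phi> a (f2 x) x"])
  fix a show "(\<lambda>x. \<phi> a (f2 x) x) \<in> borel_measurable N"
    by (rule measurable_compose_countable'[where g=f2 and I=UNIV and f="\<lambda>b x. \<phi> a b x"]) (use assms in \<open>auto intro: countableI_type\<close>)
qed (use assms in \<open>auto intro: countableI_type\<close>)



lemma ind_int: "A \<in> sets M \<Longrightarrow> integrable M f \<Longrightarrow> integrable M (\<lambda>x. indicator A x * (f x::real))"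
  using integrable_mult_indicator[of A M f] by simp

lemma cexp_compare:
  fixes f1 f2 :: "'a \<Rightarrow> real"
  assumes "prob_space M" "subalgebra M G" "Es \<in> sets G" "integrable M f1" "integrable M f2"
   and le: "\<And>A. A \<in> sets G \<Longrightarrow> A \<subseteq> Es \<Longrightarrow> (\<integral>x. indicator A x * f2 x \<partial>M) \<le> (\<integral>x. indicator A x * f1 x \<partial>M)"
  shows "AE x in M. x \<in> Es \<longrightarrow> real_cond_exp M G f2 x \<le> real_cond_exp M G f1 x"
proof -
  interpret prob_space M by fact
  interpret finite_measure_subalgebra M G by unfold_locales (use assms in auto)
  have [measurable]: "integrable M f1" "integrable M f2" by fact+
  have GM: "sets G \<subseteq> sets M" "space G = space M" using assms(2) by (auto simp: subalgebra_def)
  have EsM: "Es \<subseteq> space M" using assms(3) GM sets.sets_into_space by blast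
  define c1 where "c1 = real_cond_exp M G f1"
  define c2 where "c2 = real_cond_exp M G f2"
  have [measurable]: "c1 \<in> borel_measurable G" "c2 \<in> borel_measurable G"
    "c1 \<in> borel_measurable M" "c2 \<in> borel_measurable M"
    unfolding c1_def c2_def by measurable
  define X where "X = {x\<in>space M. x \<in> Es \<and> c1 x < c2 x}"
  have "X = Es \<inter> {x\<in>space G. c1 x < c2 x}" using EsM GM unfolding X_def by auto
  moreover have "{x\<in>space G. c1 x < c2 x} \<in> sets G" by measurable
  ultimately have XG: "X \<in> sets G" using assms(3) by auto
  then have XM[measurable]: "X \<in> sets M" using GM by auto
  have i1: "integrable M c1" "integrable M c2" unfolding c1_def c2_def
    by (simp_all add: real_cond_exp_int(1) assms(4,5))
  have "(\<integral>x. indicator X x * c2 x \<partial>M) = (\<integral>x. indicator X x * f2 x \<partial>M)"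
    unfolding c2_def by (rule real_cond_exp_intg(2)) (auto intro!: ind_int borel_measurable_indicator simp: XG XM assms(5))
  also have "\<dots> \<le> (\<integral>x. indicator X x * f1 x \<partial>M)" by (rule le[OF XG]) (auto simp: X_def)
  also have "\<dots> = (\<integral>x. indicator X x * c1 x \<partial>M)"
    unfolding c1_def by (rule real_cond_exp_intg(2)[symmetric]) (auto intro!: ind_int borel_measurable_indicator simp: XG XM assms(4))
  finally have A: "(\<integral>x. indicator X x * (c2 x - c1 x) \<partial>M) \<le> 0"
    using i1 by (simp add: right_diff_distrib ind_int)
  have int: "integrable M (\<lambda>x. indicator X x * (c2 x - c1 x))"
    using i1 by (auto intro!: ind_int)
  have nn: "AE x in M. 0 \<le> indicator X x * (c2 x - c1 x)"
    by (auto simp: X_def indicator_def)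
  have "(\<integral>x. indicator X x * (c2 x - c1 x) \<partial>M) = 0"
    using A integral_nonneg_AE[OF nn] by linarith
  then have "AE x in M. indicator X x * (c2 x - c1 x) = 0"
    using integral_nonneg_eq_0_iff_AE[OF int nn] by simp
  moreover have "AE x in M. x \<in> space M" by simp
  ultimately show ?thesis
    unfolding c1_def[symmetric] c2_def[symmetric]
    by eventually_elim (auto simp: X_def indicator_def split: if_splits)
qed



lemma indep_prod_int:
  fixes P :: "nat \<Rightarrow> 'a \<Rightarrow> real" and \<Phi> :: "(nat \<Rightarrow> real) \<Rightarrow> real" and \<psi> :: "real \<Rightarrow> real"
  assumes "prob_space M" "prob_space.indep_vars M (\<lambda>_. borel) P I"
   "J \<subseteq> I" "t \<in> I" "t \<notin> J"
   and [measurable]: "\<Phi> \<in> borel_measurable (PiM J (\<lambda>_. borel))" and bB: "\<And>x. \<bar>\<Phi> x\<bar> \<le> B"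
   and [measurable]: "\<psi> \<in> borel_measurable borel" and bC: "\<And>y. \<bar>\<psi> y\<bar> \<le> C"
  shows "(\<integral>\<omega>. \<Phi> (restrict (\<lambda>j. P j \<omega>) J) * \<psi> (P t \<omega>) \<partial>M)
       = (\<integral>\<omega>. \<Phi> (restrict (\<lambda>j. P j \<omega>) J) \<partial>M) * (\<integral>\<omega>. \<psi> (P t \<omega>) \<partial>M)"
proof -
  interpret prob_space M by fact
  have Pm[measurable]: "\<And>i. i \<in> I \<Longrightarrow> P i \<in> borel_measurable M"
    using assms(2) unfolding indep_vars_def by auto
  have "indep_vars (\<lambda>b. PiM (case_bool J {t} b) (\<lambda>_. borel)) (\<lambda>b \<omega>. restrict (\<lambda>i. P i \<omega>) (case_bool J {t} b)) UNIV"
    by (rule indep_vars_restrict[OF assms(2)]) (use assms(3,4,5) in \<open>auto simp: disjoint_family_on_def split: bool.split\<close>)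
  moreover have "(\<lambda>b. PiM (case_bool J {t} b) (\<lambda>_. borel)) = case_bool (PiM J (\<lambda>_. borel)) (PiM {t} (\<lambda>_. borel::real measure))"
    by (rule ext) (simp split: bool.split)
  moreover have "(\<lambda>b \<omega>. restrict (\<lambda>i. P i \<omega>) (case_bool J {t} b)) = case_bool (\<lambda>\<omega>. restrict (\<lambda>i. P i \<omega>) J) (\<lambda>\<omega>. restrict (\<lambda>i. P i \<omega>) {t})"
    by (rule ext) (simp split: bool.split)
  ultimately have iv: "indep_var (PiM J (\<lambda>_. borel)) (\<lambda>\<omega>. restrict (\<lambda>i. P i \<omega>) J) (PiM {t} (\<lambda>_. borel::real measure)) (\<lambda>\<omega>. restrict (\<lambda>i. P i \<omega>) {t})"
    unfolding indep_var_def by simp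
  have m2: "(\<lambda>x. \<psi> (x t)) \<in> borel_measurable (PiM {t} (\<lambda>_. borel::real measure))"
    by measurable
  have "indep_var borel (\<Phi> \<circ> (\<lambda>\<omega>. restrict (\<lambda>i. P i \<omega>) J)) borel ((\<lambda>x. \<psi> (x t)) \<circ> (\<lambda>\<omega>. restrict (\<lambda>i. P i \<omega>) {t}))"
    by (rule indep_var_compose[OF iv]) (use m2 in auto)
  then have iv2: "indep_var borel (\<lambda>\<omega>. \<Phi> (restrict (\<lambda>j. P j \<omega>) J)) borel (\<lambda>\<omega>. \<psi> (P t \<omega>))"
    by (simp add: comp_def)
  have mr[measurable]: "(\<lambda>\<omega>. restrict (\<lambda>i. P i \<omega>) J) \<in> measurable M (PiM J (\<lambda>_. borel))"
    using assms(3) by (auto intro!: measurable_restrict)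
  have i1: "integrable M (\<lambda>\<omega>. \<Phi> (restrict (\<lambda>j. P j \<omega>) J))"
    by (rule integrable_const_bound[where B=B]) (use bB in auto)
  have i2: "integrable M (\<lambda>\<omega>. \<psi> (P t \<omega>))"
    by (rule integrable_const_bound[where B=C]) (use bC assms(4) in auto)
  show ?thesis by (rule indep_var_lebesgue_integral[OF iv2 i1 i2])
qed



lemma cdf_pure:
  fixes F :: "real \<Rightarrow> real"
  assumes mono: "\<And>a b. a \<le> b \<Longrightarrow> F a \<le> F b"
    and b01: "\<And>a. F a \<le> 1"
    and F1: "F 1 = 1"
    and H: "\<And>x \<tau>. 0 < x \<Longrightarrow> x < 1 \<Longrightarrow> 0 < \<tau> \<Longrightarrow> \<tau> < 1 \<Longrightarrow> F (x * \<tau>) \<le> x * F \<tau>"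
    and y: "0 \<le> y" "y \<le> u" and u: "0 < u" "u \<le> 1"
  shows "F y \<le> y / u * F u"
proof -
  have F0: "F 0 \<le> 0"
  proof (rule ccontr)
    assume "\<not> F 0 \<le> 0"
    define x where "x = min (F 0 / 2) (1/2)"
    have x: "0 < x" "x < 1" "x < F 0" using \<open>\<not> F 0 \<le> 0\<close> b01[of 0] by (auto simp: x_def)
    have "F 0 \<le> F (x * (1/2))" using x by (intro mono) auto
    also have "\<dots> \<le> x * F (1/2)" using H[of x "1/2"] x by auto
    also have "\<dots> \<le> x" using b01[of "1/2"] x by (simp add: mult_left_le)
    finally show False using x by simp
  qed
  show ?thesis
  proof (cases "y = u")
    case True then show ?thesis using u by simp
  next
    case False
    then have yu: "y < u" using y by simp
    show ?thesis
    proof (cases "y = 0")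
      case True
      show ?thesis using True F0 by simp
    next
      case False
      then have y0: "0 < y" using y by simp
      show ?thesis
      proof (cases "u < 1")
        case True
        have "F y = F ((y/u) * u)" using u by simp
        also have "\<dots> \<le> (y/u) * F u" using H[of "y/u" u] y0 yu u True by auto
        finally show ?thesis .
      next
        case False
        then have u1: "u = 1" using u by simp
        have "F y \<le> y"
        proof (rule ccontr)
          assume A: "\<not> F y \<le> y"
          then have Fy: "F y > 0" using y0 by simp
          have q: "y / F y < 1" using A Fy by (simp add: divide_less_eq)
          have q2: "y \<le> y / F y" using Fy b01[of y] y0 by (simp add: le_divide_eq)
          define \<tau> where "\<tau> = (y / F y + 1) / 2"
          obtain z where z: "z = y / F y" by simp
          have t1: "y / F y < \<tau>" using q unfolding \<tau>_def z[symmetric] by (simp add: field_simps)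
          have t2: "\<tau> < 1" using q unfolding \<tau>_def z[symmetric] by (simp add: field_simps)
          have t3: "y < \<tau>" using t1 q2 by linarith
          note \<tau> = t3 t2 t1
          have "F y = F ((y/\<tau>) * \<tau>)" using \<tau> y0 by simp
          also have "\<dots> \<le> (y/\<tau>) * F \<tau>" using H[of "y/\<tau>" \<tau>] y0 \<tau> by auto
          also have "\<dots> \<le> y / \<tau>"
          proof -
            have "y * F \<tau> \<le> y" using b01[of \<tau>] y0 by (simp add: mult_left_le)
            then show ?thesis using \<tau> y0 by (simp add: divide_right_mono)
          qed
          finally have "F y \<le> y / \<tau>" .
          moreover have "y / \<tau> < F y" using \<tau>(3) Fy y0 \<tau> by (simp add: divide_less_eq pos_divide_less_eq mult.commute)
          ultimately show False by simp
        qed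
        then show ?thesis using u1 F1 by simp
      qed
    qed
  qed
qed



locale addis =
  fixes M :: "'a measure" and P :: "nat \<Rightarrow> 'a \<Rightarrow> real"
    and al la ta :: level_fn and g :: "bool list \<Rightarrow> real"
    and T t :: nat
  assumes ps: "prob_space M"
    and indep: "prob_space.indep_vars M (\<lambda>_. borel) P {1..}"
    and pval: "\<And>j \<omega>. j \<ge> 1 \<Longrightarrow> \<omega> \<in> space M \<Longrightarrow> P j \<omega> \<in> {0..1}"
    and g_mono: "\<And>r r'. length r = T \<Longrightarrow> list_all2 (\<le>) r r' \<Longrightarrow> g r \<le> g r'"
    and mono_al: "\<And>s. s \<ge> 1 \<Longrightarrow> mono_past al s"
    and mono_la: "\<And>s. s \<ge> 1 \<Longrightarrow> mono_past la s"
    and mono_ta: "\<And>s. s \<ge> 1 \<Longrightarrow> mono_past (\<lambda>k r c s. 1 - ta k r c s) s"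
    and range: "\<And>s r c q. s \<ge> 1 \<Longrightarrow> length r = s - 1 \<Longrightarrow> length c = s - 1 \<Longrightarrow> length q = s - 1 \<Longrightarrow>
                  al s r c q \<in> {0..1} \<and> la s r c q \<in> {0..1} \<and> ta s r c q \<in> {0..1}"
    and order: "\<And>s r c q. s \<ge> 1 \<Longrightarrow> length r = s - 1 \<Longrightarrow> length c = s - 1 \<Longrightarrow> length q = s - 1 \<Longrightarrow>
                  al s r c q \<le> la s r c q \<and> la s r c q < ta s r c q"
    and t1: "1 \<le> t" and tT: "t \<le> T"
    and cuc: "cond_unif_conservative M P al la ta t"
begin

interpretation prob_space M by (rule ps)

definition Dfun :: "(nat \<Rightarrow> real) \<Rightarrow> real" where
  "Dfun p = max (g (fst (hist al la ta p T))) 1"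

lemma Pm[measurable]: "1 \<le> j \<Longrightarrow> P j \<in> borel_measurable M"
  using indep unfolding indep_vars_def by auto

lemma hist_M[measurable]: "(\<lambda>\<omega>. hist al la ta (\<lambda>j. P j \<omega>) n) \<in> measurable M (count_space UNIV)"
  by (rule hist_meas) auto

lemma Dfun_mono:
  assumes "hord (hist al la ta p T) (hist al la ta p' T)"
  shows "Dfun p \<le> Dfun p'"
proof -
  obtain r c s where rcs: "hist al la ta p T = (r,c,s)" by (cases "hist al la ta p T") auto
  obtain r' c' s' where rcs': "hist al la ta p' T = (r',c',s')" by (cases "hist al la ta p' T") auto
  have "length r = T" using hist_len[OF rcs] by simp
  moreover have "list_all2 (\<le>) r r'" using assms rcs rcs' by (simp add: hord_def)
  ultimately have "g r \<le> g r'" by (rule g_mono)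
  then show ?thesis unfolding Dfun_def rcs rcs' by simp
qed

lemma hist_t:
  assumes "hist al la ta p (t-1) = (r,c,s)"
  shows "hist al la ta p t = (r @ [p t \<le> al t r c s], c @ [p t \<le> la t r c s], s @ [p t \<le> ta t r c s])"
proof -
  obtain k where k: "t = Suc k" using t1 by (cases t) auto
  show ?thesis using assms unfolding k by simp
qed

lemma hist_upd: "hist al la ta (p(t := v)) (t-1) = hist al la ta p (t-1)"
  by (rule hist_cong) auto

lemma D_step:
  assumes "hord (hist al la ta p t) (hist al la ta p' t)" "\<And>j. j \<noteq> t \<Longrightarrow> p j = p' j"
  shows "Dfun p \<le> Dfun p'"
  by (rule Dfun_mono, rule hist_mono[OF mono_al mono_la mono_ta]) (use assms tT in auto)

lemma D_bounds:
  assumes h: "hist al la ta p (t-1) = (r,c,s)" and pu: "p t \<le> ta t r c s"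
  shows "Dfun (p(t := ta t r c s)) \<le> Dfun p" "Dfun p \<le> Dfun (p(t := 0))"
    "la t r c s < p t \<Longrightarrow> Dfun p \<le> Dfun (p(t := ta t r c s))"
    "p t \<le> al t r c s \<Longrightarrow> Dfun (p(t := 0)) \<le> Dfun p"
proof -
  have len: "length r = t - 1" "length c = t - 1" "length s = t - 1" using hist_len[OF h] by auto
  have rg: "0 \<le> al t r c s" "al t r c s \<le> la t r c s" "la t r c s < ta t r c s"
    using range[OF t1 len] order[OF t1 len] by auto
  have hu: "hist al la ta (p(t := v)) (t-1) = (r,c,s)" for v using hist_upd h by simp
  note H = hist_t[OF hu] hist_t[OF h]
  show "Dfun (p(t := ta t r c s)) \<le> Dfun p"
    by (rule D_step) (use rg pu in \<open>auto simp: H hord_def list_all2_refl intro!: list_all2_appendI\<close>)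
  show "Dfun p \<le> Dfun (p(t := 0))"
    by (rule D_step) (use rg pu in \<open>auto simp: H hord_def list_all2_refl intro!: list_all2_appendI\<close>)
  show "la t r c s < p t \<Longrightarrow> Dfun p \<le> Dfun (p(t := ta t r c s))"
    by (rule D_step) (use rg pu in \<open>auto simp: H hord_def list_all2_refl intro!: list_all2_appendI\<close>)
  show "p t \<le> al t r c s \<Longrightarrow> Dfun (p(t := 0)) \<le> Dfun p"
    by (rule D_step) (use rg pu in \<open>auto simp: H hord_def list_all2_refl intro!: list_all2_appendI\<close>)
qed


lemma Xf_meas:
  fixes E :: "'a \<Rightarrow> bool"
  assumes [measurable]: "E \<in> measurable M (count_space UNIV)"
  shows "(\<lambda>\<omega>. (hist al la ta (\<lambda>j. P j \<omega>) (t - 1), E \<omega>)) \<in> measurable M (count_space UNIV)"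
proof (rule measurable_compose_countable'[where g="\<lambda>\<omega>. hist al la ta (\<lambda>j. P j \<omega>) (t - 1)" and I=UNIV
      and f="\<lambda>h \<omega>. (h, E \<omega>)"])
  fix h :: "bool list \<times> bool list \<times> bool list"
  show "(\<lambda>\<omega>. (h, E \<omega>)) \<in> measurable M (count_space UNIV)"
    by (rule measurable_compose_countable'[where g=E and I=UNIV and f="\<lambda>b \<omega>. (h, b)"])
       (auto intro: countableI_type)
qed (auto intro: countableI_type)

lemma past_sub:
  fixes E :: "'a \<Rightarrow> bool"
  assumes [measurable]: "E \<in> measurable M (count_space UNIV)"
  shows "subalgebra M (past_with M P al la ta t E)"
    "{\<omega>\<in>space M. E \<omega>} \<in> sets (past_with M P al la ta t E)"
    "sets (past_with M P al la ta t E) = {(\<lambda>\<omega>. (hist al la ta (\<lambda>j. P j \<omega>) (t - 1), E \<omega>)) -` B \<inter> space M | B. B \<in> sets (count_space UNIV)}"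
proof -
  note X = Xf_meas[OF assms]
  show S: "sets (past_with M P al la ta t E) = {(\<lambda>\<omega>. (hist al la ta (\<lambda>j. P j \<omega>) (t - 1), E \<omega>)) -` B \<inter> space M | B. B \<in> sets (count_space UNIV)}"
    unfolding past_with_def by (rule sets_vimage_algebra2) auto
  show "subalgebra M (past_with M P al la ta t E)"
    unfolding subalgebra_def
  proof
    show "space (past_with M P al la ta t E) = space M" by (simp add: past_with_def)
    show "sets (past_with M P al la ta t E) \<subseteq> sets M"
      unfolding S using measurable_sets[OF X] by auto
  qed
  have "{\<omega>\<in>space M. E \<omega>} = (\<lambda>\<omega>. (hist al la ta (\<lambda>j. P j \<omega>) (t - 1), E \<omega>)) -` {z. snd z} \<inter> space M"
    by auto
  then show "{\<omega>\<in>space M. E \<omega>} \<in> sets (past_with M P al la ta t E)"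
    unfolding S by (intro CollectI exI[of _ "{z. snd z}"]) simp
qed

definition Fc :: "real \<Rightarrow> real" where
  "Fc v = measure M {\<omega>\<in>space M. P t \<omega> \<le> v}"

lemma Fc_H:
  assumes x: "0 < x" "x < 1" and \<tau>: "0 < \<tau>" "\<tau> < 1"
  shows "Fc (x * \<tau>) \<le> x * Fc \<tau>"
proof -
  define E where "E = (\<lambda>\<omega>. P t \<omega> \<le> \<tau>)"
  have Em[measurable]: "E \<in> measurable M (count_space UNIV)" unfolding E_def using t1 by measurable
  define G where "G = past_with M P al la ta t E"
  note PS = past_sub[OF Em, folded G_def]
  interpret S: finite_measure_subalgebra M G by unfold_locales (use PS in auto)
  define Es where "Es = {\<omega>\<in>space M. E \<omega>}"
  have EsG: "Es \<in> sets G" using PS Es_def by auto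
  have EsM[measurable]: "Es \<in> sets M" unfolding Es_def using Em by measurable
  define fx where "fx = (\<lambda>\<omega>. of_bool (P t \<omega> / \<tau> \<le> x) :: real)"
  have fxm[measurable]: "fx \<in> borel_measurable M" unfolding fx_def of_bool_def using t1 by measurable
  have fxi: "integrable M fx" by (rule integrable_const_bound[where B=1]) (use fxm in \<open>auto simp: fx_def\<close>)
  have AEc: "AE \<omega> in M. P t \<omega> \<le> \<tau> \<longrightarrow> real_cond_exp M G fx \<omega> \<le> x"
    using cuc x \<tau> unfolding cond_unif_conservative_def G_def E_def fx_def by blast
  have "(\<integral>\<omega>. indicator Es \<omega> * real_cond_exp M G fx \<omega> \<partial>M) = (\<integral>\<omega>. indicator Es \<omega> * fx \<omega> \<partial>M)"
    by (rule S.real_cond_exp_intg(2)) (auto intro!: ind_int borel_measurable_indicator simp: EsG fxi)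
  also have "\<dots> = (\<integral>\<omega>. indicator {\<omega>\<in>space M. P t \<omega> \<le> x * \<tau>} \<omega> \<partial>M)"
  proof (rule Bochner_Integration.integral_cong)
    fix \<omega> assume "\<omega> \<in> space M"
    have "P t \<omega> / \<tau> \<le> x \<longleftrightarrow> P t \<omega> \<le> x * \<tau>" using \<tau> by (simp add: divide_le_eq)
    moreover have "x * \<tau> \<le> \<tau>" using x \<tau> by simp
    ultimately show "indicator Es \<omega> * fx \<omega> = indicator {\<omega>\<in>space M. P t \<omega> \<le> x * \<tau>} \<omega>"
      using \<open>\<omega> \<in> space M\<close> by (auto simp: Es_def E_def fx_def indicator_def)
  qed simp
  also have "\<dots> = Fc (x * \<tau>)" by (simp add: Fc_def Int_absorb2)
  finally have eq1: "(\<integral>\<omega>. indicator Es \<omega> * real_cond_exp M G fx \<omega> \<partial>M) = Fc (x * \<tau>)" .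
  have "(\<integral>\<omega>. indicator Es \<omega> * real_cond_exp M G fx \<omega> \<partial>M) \<le> (\<integral>\<omega>. indicator Es \<omega> * x \<partial>M)"
  proof (rule integral_mono_AE)
    show "integrable M (\<lambda>\<omega>. indicator Es \<omega> * real_cond_exp M G fx \<omega>)"
      by (rule ind_int[OF EsM S.real_cond_exp_int(1)[OF fxi]])
    show "integrable M (\<lambda>\<omega>. indicator Es \<omega> * x)"
      by (rule ind_int[OF EsM]) simp
    show "AE \<omega> in M. indicator Es \<omega> * real_cond_exp M G fx \<omega> \<le> indicator Es \<omega> * x"
      using AEc by eventually_elim (auto simp: indicator_def Es_def E_def)
  qed
  also have "\<dots> = x * Fc \<tau>" using EsM by (simp add: Fc_def Es_def E_def mult.commute)
  finally show ?thesis using eq1 by simp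
qed

lemma Fc_mono: "a \<le> b \<Longrightarrow> Fc a \<le> Fc b"
  unfolding Fc_def by (rule finite_measure_mono) (use t1 in auto)

lemma Fc_ineq:
  assumes "0 \<le> y" "y \<le> u" "0 < u" "u \<le> 1"
  shows "Fc y \<le> y / u * Fc u"
proof (rule cdf_pure[where F=Fc])
  show "Fc a \<le> 1" for a unfolding Fc_def by simp
  show "a \<le> b \<Longrightarrow> Fc a \<le> Fc b" for a b by (rule Fc_mono)
  show "0 < x \<Longrightarrow> x < 1 \<Longrightarrow> 0 < \<tau> \<Longrightarrow> \<tau> < 1 \<Longrightarrow> Fc (x * \<tau>) \<le> x * Fc \<tau>" for x \<tau> by (rule Fc_H)
  have "{\<omega> \<in> space M. P t \<omega> \<le> 1} = space M" using pval[OF t1] by auto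
  then show "Fc 1 = 1" unfolding Fc_def by (simp add: prob_space)
qed (use assms in auto)

definition cs :: "level_fn \<Rightarrow> bool list \<times> bool list \<times> bool list \<Rightarrow> real" where
  "cs f h = (case h of (r,c,s) \<Rightarrow> f t r c s)"

definition LV :: "level_fn \<Rightarrow> 'a \<Rightarrow> real" where
  "LV f \<omega> = lev al la ta f (\<lambda>j. P j \<omega>) t"

lemma LV_cs: "LV f \<omega> = cs f (hist al la ta (\<lambda>j. P j \<omega>) (t - 1))"
  by (simp add: LV_def lev_def cs_def)

definition f1 :: "'a \<Rightarrow> real" where
  "f1 \<omega> = LV al \<omega> * of_bool (LV la \<omega> < P t \<omega> \<and> P t \<omega> \<le> LV ta \<omega>) / ((LV ta \<omega> - LV la \<omega>) * Dfun (\<lambda>j. P j \<omega>))"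
definition f2 :: "'a \<Rightarrow> real" where
  "f2 \<omega> = LV al \<omega> / (LV ta \<omega> * Dfun (\<lambda>j. P j \<omega>))"
definition f3 :: "'a \<Rightarrow> real" where
  "f3 \<omega> = of_bool (P t \<omega> \<le> LV al \<omega>) / Dfun (\<lambda>j. P j \<omega>)"

lemma meas_form:
  assumes "\<And>j. 1 \<le> j \<Longrightarrow> (\<lambda>\<omega>. F \<omega> j) \<in> borel_measurable M"
   and "\<And>h1 h2. (\<lambda>y. \<phi> h1 h2 y) \<in> borel_measurable borel"
  shows "(\<lambda>\<omega>. \<phi> (hist al la ta (\<lambda>j. P j \<omega>) (t-1)) (hist al la ta (F \<omega>) T) (P t \<omega>)) \<in> borel_measurable M"
proof (rule meas_cnt2[where \<phi>="\<lambda>h1 h2 \<omega>. \<phi> h1 h2 (P t \<omega>)"])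
  show "(\<lambda>\<omega>. hist al la ta (F \<omega>) T) \<in> measurable M (count_space UNIV)"
    by (rule hist_meas) (use assms(1) in auto)
  show "(\<lambda>\<omega>. \<phi> a b (P t \<omega>)) \<in> borel_measurable M" for a b
    using measurable_compose[OF Pm[OF t1] assms(2)] by simp
qed simp

definition HS :: "(bool list \<times> bool list \<times> bool list) set" where
  "HS = {r. length r = t - 1} \<times> {c. length c = t - 1} \<times> {s. length s = t - 1}"

definition mm :: real where
  "mm = Min ((\<lambda>h. cs ta h - cs la h) ` HS)"

lemma HS_fin: "finite HS"
  unfolding HS_def by (intro finite_cartesian_product finite_list_length)

lemma hist_HS: "hist al la ta p (t-1) \<in> HS"
  using hist_len[of al la ta p "t-1"] unfolding HS_def by (cases "hist al la ta p (t-1)") auto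

lemma cs_props:
  assumes "h \<in> HS"
  shows "0 \<le> cs al h" "cs al h \<le> cs la h" "0 \<le> cs la h" "cs la h < cs ta h" "cs ta h \<le> 1" "cs al h \<le> 1"
    "mm \<le> cs ta h - cs la h"
proof -
  obtain r c s where h: "h = (r,c,s)" "length r = t-1" "length c = t-1" "length s = t-1"
    using assms unfolding HS_def by auto
  show "0 \<le> cs al h" "cs al h \<le> cs la h" "0 \<le> cs la h" "cs la h < cs ta h" "cs ta h \<le> 1" "cs al h \<le> 1"
    using range[OF t1 h(2-4)] order[OF t1 h(2-4)] by (auto simp: cs_def h(1))
  show "mm \<le> cs ta h - cs la h" unfolding mm_def using HS_fin assms by (intro Min_le) auto
qed

lemma mm_pos: "0 < mm"
proof -
  have ne: "HS \<noteq> {}" using hist_HS by auto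
  have "mm \<in> (\<lambda>h. cs ta h - cs la h) ` HS" unfolding mm_def using HS_fin ne by (intro Min_in) auto
  then show ?thesis using cs_props(4) by auto
qed

lemma LV_props:
  "0 \<le> LV al \<omega>" "LV al \<omega> \<le> LV la \<omega>" "0 \<le> LV la \<omega>" "LV la \<omega> < LV ta \<omega>" "LV ta \<omega> \<le> 1" "LV al \<omega> \<le> 1"
  "mm \<le> LV ta \<omega> - LV la \<omega>"
  unfolding LV_cs using cs_props[OF hist_HS] by auto

lemma Dfun_ge1: "1 \<le> Dfun p" by (simp add: Dfun_def)

lemma f1_meas[measurable]: "f1 \<in> borel_measurable M"
proof -
  have "f1 = (\<lambda>\<omega>. (\<lambda>h1 h2 y. cs al h1 * of_bool (cs la h1 < y \<and> y \<le> cs ta h1) / ((cs ta h1 - cs la h1) * max (g (fst h2)) 1))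
      (hist al la ta (\<lambda>j. P j \<omega>) (t-1)) (hist al la ta (\<lambda>j. P j \<omega>) T) (P t \<omega>))"
    by (rule ext) (simp add: f1_def LV_cs Dfun_def)
  also have "\<dots> \<in> borel_measurable M"
    by (rule meas_form) (auto simp: of_bool_def)
  finally show ?thesis .
qed

lemma f2_meas[measurable]: "f2 \<in> borel_measurable M"
proof -
  have "f2 = (\<lambda>\<omega>. (\<lambda>h1 h2 y. cs al h1 / (cs ta h1 * max (g (fst h2)) 1))
      (hist al la ta (\<lambda>j. P j \<omega>) (t-1)) (hist al la ta (\<lambda>j. P j \<omega>) T) (P t \<omega>))"
    by (rule ext) (simp add: f2_def LV_cs Dfun_def)
  also have "\<dots> \<in> borel_measurable M"
    by (rule meas_form) auto
  finally show ?thesis .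
qed

lemma f3_meas[measurable]: "f3 \<in> borel_measurable M"
proof -
  have "f3 = (\<lambda>\<omega>. (\<lambda>h1 h2 y. of_bool (y \<le> cs al h1) / max (g (fst h2)) 1)
      (hist al la ta (\<lambda>j. P j \<omega>) (t-1)) (hist al la ta (\<lambda>j. P j \<omega>) T) (P t \<omega>))"
    by (rule ext) (simp add: f3_def LV_cs Dfun_def)
  also have "\<dots> \<in> borel_measurable M"
    by (rule meas_form) (auto simp: of_bool_def)
  finally show ?thesis .
qed

lemma f1_int: "integrable M f1"
proof (rule integrable_const_bound[where B="1/mm"])
  show "AE x in M. norm (f1 x) \<le> 1 / mm"
  proof (rule AE_I2)
    fix \<omega>
    note L = LV_props[of \<omega>] mm_pos Dfun_ge1[of "\<lambda>j. P j \<omega>"]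
    have "mm * 1 \<le> (LV ta \<omega> - LV la \<omega>) * Dfun (\<lambda>j. P j \<omega>)"
      using L by (intro mult_mono) auto
    moreover have "0 \<le> LV al \<omega> * of_bool (LV la \<omega> < P t \<omega> \<and> P t \<omega> \<le> LV ta \<omega>)" using L by simp
    moreover have "LV al \<omega> * of_bool (LV la \<omega> < P t \<omega> \<and> P t \<omega> \<le> LV ta \<omega>) \<le> 1" using L by simp
    ultimately have "f1 \<omega> \<le> 1 / mm" "0 \<le> f1 \<omega>" unfolding f1_def using L
      by (auto intro!: frac_le divide_nonneg_pos)
    then show "norm (f1 \<omega>) \<le> 1 / mm" by simp
  qed
qed simp

lemma f2_int: "integrable M f2"
proof (rule integrable_const_bound[where B="1/mm"])
  show "AE x in M. norm (f2 x) \<le> 1 / mm"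
  proof (rule AE_I2)
    fix \<omega>
    note L = LV_props[of \<omega>] mm_pos Dfun_ge1[of "\<lambda>j. P j \<omega>"]
    have "mm * 1 \<le> LV ta \<omega> * Dfun (\<lambda>j. P j \<omega>)"
      using L by (intro mult_mono) auto
    then have "f2 \<omega> \<le> 1 / mm" "0 \<le> f2 \<omega>" unfolding f2_def using L
      by (auto intro!: frac_le divide_nonneg_pos)
    then show "norm (f2 \<omega>) \<le> 1 / mm" by simp
  qed
qed simp

lemma f3_int: "integrable M f3"
proof (rule integrable_const_bound[where B=1])
  show "AE x in M. norm (f3 x) \<le> 1"
  proof (rule AE_I2)
    fix \<omega>
    have "1 \<le> Dfun (\<lambda>j. P j \<omega>)" by (rule Dfun_ge1)
    then show "norm (f3 \<omega>) \<le> 1" by (auto simp: f3_def)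
  qed
qed simp
end



context addis begin
interpretation prob_space M by (rule ps)

definition Zv :: "bool list \<times> bool list \<times> bool list \<Rightarrow> real \<Rightarrow> 'a \<Rightarrow> real" where
  "Zv h v \<omega> = of_bool (hist al la ta (\<lambda>j. P j \<omega>) (t-1) = h) / Dfun ((\<lambda>j. P j \<omega>)(t := v))"

lemma Zv_meas[measurable]: "Zv h v \<in> borel_measurable M"
proof -
  have "Zv h v = (\<lambda>\<omega>. (\<lambda>h1 h2 y. of_bool (h1 = h) / max (g (fst h2)) 1)
      (hist al la ta (\<lambda>j. P j \<omega>) (t-1)) (hist al la ta ((\<lambda>j. P j \<omega>)(t := v)) T) (P t \<omega>))"
    by (rule ext) (simp add: Zv_def Dfun_def)
  also have "\<dots> \<in> borel_measurable M"
  proof (rule meas_form)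
    fix j :: nat assume "1 \<le> j"
    then show "(\<lambda>\<omega>. ((\<lambda>j. P j \<omega>)(t := v)) j) \<in> borel_measurable M"
      by (cases "j = t") auto
  qed auto
  finally show ?thesis .
qed

lemma Zv_bnd: "0 \<le> Zv h v \<omega>" "Zv h v \<omega> \<le> 1"
  using Dfun_ge1[of "(\<lambda>j. P j \<omega>)(t := v)"] by (auto simp: Zv_def)

lemma Zv_int: "integrable M (Zv h v)"
  by (rule integrable_const_bound[where B=1]) (use Zv_bnd in auto)

lemma Zv_indep:
  assumes [measurable]: "\<psi> \<in> borel_measurable borel" and bC: "\<And>y. \<bar>\<psi> y\<bar> \<le> C"
  shows "(\<integral>\<omega>. Zv h v \<omega> * \<psi> (P t \<omega>) \<partial>M) = (\<integral>\<omega>. Zv h v \<omega> \<partial>M) * (\<integral>\<omega>. \<psi> (P t \<omega>) \<partial>M)"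
proof -
  define J where "J = {1..T} - {t}"
  define \<Phi> where "\<Phi> = (\<lambda>x. of_bool (hist al la ta (x(t := v)) (t-1) = h) / Dfun (x(t := v)))"
  have eq: "\<Phi> (restrict (\<lambda>j. P j \<omega>) J) = Zv h v \<omega>" for \<omega>
  proof -
    have c1: "hist al la ta ((restrict (\<lambda>j. P j \<omega>) J)(t := v)) (t-1) = hist al la ta (\<lambda>j. P j \<omega>) (t-1)"
      by (rule hist_cong) (use tT in \<open>auto simp: J_def\<close>)
    have c2: "hist al la ta ((restrict (\<lambda>j. P j \<omega>) J)(t := v)) T = hist al la ta ((\<lambda>j. P j \<omega>)(t := v)) T"
      by (rule hist_cong) (auto simp: J_def)
    show ?thesis unfolding \<Phi>_def Zv_def Dfun_def c1 c2 ..
  qed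
  have Pm: "\<Phi> \<in> borel_measurable (PiM J (\<lambda>_. borel))"
  proof -
    have "\<Phi> = (\<lambda>x. (\<lambda>h1 h2 x. of_bool (h1 = h) / max (g (fst h2)) 1) (hist al la ta (x(t := v)) (t-1)) (hist al la ta (x(t := v)) T) x)"
      by (rule ext) (simp add: \<Phi>_def Dfun_def)
    also have "\<dots> \<in> borel_measurable (PiM J (\<lambda>_. borel))"
    proof -
      have cm: "(\<lambda>x. (x(t := v)) j) \<in> borel_measurable (PiM J (\<lambda>_. borel))" if "1 \<le> j" "j \<le> T" for j
      proof (cases "j = t")
        case False
        then have "j \<in> J" using that by (auto simp: J_def)
        then show ?thesis using False by simp
      qed simp
      have m1: "(\<lambda>x. hist al la ta (x(t := v)) (t-1)) \<in> measurable (PiM J (\<lambda>_. borel)) (count_space UNIV)"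
        by (rule hist_meas) (use cm tT in auto)
      have m2: "(\<lambda>x. hist al la ta (x(t := v)) T) \<in> measurable (PiM J (\<lambda>_. borel)) (count_space UNIV)"
        by (rule hist_meas) (use cm tT in auto)
      show ?thesis by (rule meas_cnt2[OF m1 m2]) simp
    qed
    finally show ?thesis .
  qed
  have bB: "\<bar>\<Phi> x\<bar> \<le> 1" for x using Dfun_ge1[of "x(t := v)"] by (auto simp: \<Phi>_def)
  have "(\<integral>\<omega>. \<Phi> (restrict (\<lambda>j. P j \<omega>) J) * \<psi> (P t \<omega>) \<partial>M)
       = (\<integral>\<omega>. \<Phi> (restrict (\<lambda>j. P j \<omega>) J) \<partial>M) * (\<integral>\<omega>. \<psi> (P t \<omega>) \<partial>M)"
    by (rule indep_prod_int[OF ps indep _ _ _ Pm bB assms]) (use t1 in \<open>auto simp: J_def\<close>)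
  then show ?thesis unfolding eq .
qed

end



context addis begin
interpretation prob_space M by (rule ps)

definition At :: "bool list \<times> bool list \<times> bool list \<Rightarrow> 'a set" where
  "At h = {\<omega>\<in>space M. hist al la ta (\<lambda>j. P j \<omega>) (t-1) = h \<and> P t \<omega> \<le> LV ta \<omega>}"

lemma pw:
  assumes hH: "h \<in> HS" and \<omega>: "\<omega> \<in> space M"
  shows "indicator (At h) \<omega> * f1 \<omega> = cs al h / (cs ta h - cs la h) * (Zv h (cs ta h) \<omega> * of_bool (cs la h < P t \<omega> \<and> P t \<omega> \<le> cs ta h))"
    "indicator (At h) \<omega> * f2 \<omega> \<le> cs al h / cs ta h * (Zv h (cs ta h) \<omega> * of_bool (P t \<omega> \<le> cs ta h))"
    "cs al h / cs ta h * (Zv h 0 \<omega> * of_bool (P t \<omega> \<le> cs ta h)) \<le> indicator (At h) \<omega> * f2 \<omega>"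
    "indicator (At h) \<omega> * f3 \<omega> = Zv h 0 \<omega> * of_bool (P t \<omega> \<le> cs al h)"
proof -
  obtain r c s where h: "h = (r,c,s)" by (cases h) auto
  define p where "p = (\<lambda>j. P j \<omega>)"
  note cp = cs_props[OF hH]
  have all: "(indicator (At h) \<omega> * f1 \<omega> = cs al h / (cs ta h - cs la h) * (Zv h (cs ta h) \<omega> * of_bool (cs la h < P t \<omega> \<and> P t \<omega> \<le> cs ta h))) \<and> (indicator (At h) \<omega> * f2 \<omega> \<le> cs al h / cs ta h * (Zv h (cs ta h) \<omega> * of_bool (P t \<omega> \<le> cs ta h))) \<and> (cs al h / cs ta h * (Zv h 0 \<omega> * of_bool (P t \<omega> \<le> cs ta h)) \<le> indicator (At h) \<omega> * f2 \<omega>) \<and> (indicator (At h) \<omega> * f3 \<omega> = Zv h 0 \<omega> * of_bool (P t \<omega> \<le> cs al h))"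
  proof (cases "hist al la ta p (t-1) = h")
    case False
    then show ?thesis by (simp add: At_def Zv_def p_def[symmetric] indicator_def)
  next
    case True
    have LV: "LV f \<omega> = cs f h" for f using True by (simp add: LV_cs p_def)
    have hp: "hist al la ta p (t-1) = (r,c,s)" using True h by simp
    have csr: "cs f h = f t r c s" for f by (simp add: h cs_def)
    have Zu: "Zv h v \<omega> = 1 / Dfun (p(t := v))" for v using True by (simp add: Zv_def p_def)
    have Pt: "P t \<omega> = p t" by (simp add: p_def)
    show ?thesis
    proof (cases "P t \<omega> \<le> cs ta h")
      case False
      then have "\<omega> \<notin> At h" by (simp add: At_def LV)
      then show ?thesis using False cp by (simp add: indicator_def f3_def LV)
    next
      case True
      then have inA: "\<omega> \<in> At h" using \<omega> \<open>hist al la ta p (t-1) = h\<close> by (simp add: At_def LV p_def)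
      have pu: "p t \<le> ta t r c s" using True by (simp add: Pt csr)
      note DB = D_bounds[OF hp pu]
      have Dpos: "0 < Dfun q" for q using Dfun_ge1[of q] by simp
      have D1: "Dfun (p(t := cs ta h)) \<le> Dfun p" "Dfun p \<le> Dfun (p(t := 0))" using DB(1,2) by (simp_all add: csr)
      have D2: "cs la h < P t \<omega> \<Longrightarrow> Dfun p = Dfun (p(t := cs ta h))" using DB(1,3) by (simp add: csr Pt)
      have D3: "P t \<omega> \<le> cs al h \<Longrightarrow> Dfun p = Dfun (p(t := 0))" using DB(2,4) by (simp add: csr Pt)
      have e1: "indicator (At h) \<omega> * f1 \<omega> = cs al h / (cs ta h - cs la h) * (Zv h (cs ta h) \<omega> * of_bool (cs la h < P t \<omega> \<and> P t \<omega> \<le> cs ta h))"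
      proof (cases "cs la h < P t \<omega>")
        case True
        then show ?thesis using inA \<open>P t \<omega> \<le> cs ta h\<close> D2[OF True]
          by (simp add: f1_def LV Zu p_def[symmetric])
      next
        case False
        then show ?thesis using inA by (simp add: f1_def LV)
      qed
      have e2: "indicator (At h) \<omega> * f2 \<omega> \<le> cs al h / cs ta h * (Zv h (cs ta h) \<omega> * of_bool (P t \<omega> \<le> cs ta h))"
      proof -
        have "cs al h / (cs ta h * Dfun p) \<le> cs al h / (cs ta h * Dfun (p(t := cs ta h)))"
          using cp D1 Dpos by (intro divide_left_mono mult_left_mono mult_pos_pos) auto
        then show ?thesis using inA \<open>P t \<omega> \<le> cs ta h\<close>
          by (simp add: f2_def LV Zu p_def[symmetric])
      qed
      have e3: "cs al h / cs ta h * (Zv h 0 \<omega> * of_bool (P t \<omega> \<le> cs ta h)) \<le> indicator (At h) \<omega> * f2 \<omega>"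
      proof -
        have "cs al h / (cs ta h * Dfun (p(t := 0))) \<le> cs al h / (cs ta h * Dfun p)"
          using cp D1 Dpos by (intro divide_left_mono mult_left_mono mult_pos_pos) auto
        then show ?thesis using inA \<open>P t \<omega> \<le> cs ta h\<close>
          by (simp add: f2_def LV Zu p_def[symmetric])
      qed
      have e4: "indicator (At h) \<omega> * f3 \<omega> = Zv h 0 \<omega> * of_bool (P t \<omega> \<le> cs al h)"
      proof (cases "P t \<omega> \<le> cs al h")
        case True
        then show ?thesis using inA D3[OF True] by (simp add: f3_def LV Zu p_def[symmetric])
      next
        case False
        then show ?thesis using inA by (simp add: f3_def LV)
      qed
      show ?thesis using e1 e2 e3 e4 by blast
    qed
  qed
  then show "indicator (At h) \<omega> * f1 \<omega> = cs al h / (cs ta h - cs la h) * (Zv h (cs ta h) \<omega> * of_bool (cs la h < P t \<omega> \<and> P t \<omega> \<le> cs ta h))"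
    "indicator (At h) \<omega> * f2 \<omega> \<le> cs al h / cs ta h * (Zv h (cs ta h) \<omega> * of_bool (P t \<omega> \<le> cs ta h))"
    "cs al h / cs ta h * (Zv h 0 \<omega> * of_bool (P t \<omega> \<le> cs ta h)) \<le> indicator (At h) \<omega> * f2 \<omega>"
    "indicator (At h) \<omega> * f3 \<omega> = Zv h 0 \<omega> * of_bool (P t \<omega> \<le> cs al h)"
    by auto
qed

end



lemma arith1:
  fixes a e u l Fu Fl :: real
  assumes "0 \<le> a" "0 \<le> e" "0 \<le> l" "l < u" "Fl \<le> l / u * Fu"
  shows "a / u * (e * Fu) \<le> a / (u - l) * (e * (Fu - Fl))"
proof -
  have u: "0 < u" using assms by simp
  have "Fu / u \<le> (Fu - Fl) / (u - l)"
  proof -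
    have "u * Fl \<le> l * Fu" using assms(5) u by (simp add: field_simps)
    then have "Fu * (u - l) \<le> (Fu - Fl) * u" by (simp add: algebra_simps)
    then show ?thesis using u assms(4) by (simp add: divide_simps)
  qed
  then have "(a * e) * (Fu / u) \<le> (a * e) * ((Fu - Fl) / (u - l))"
    using assms by (intro mult_left_mono) auto
  moreover have "a / u * (e * Fu) = (a * e) * (Fu / u)" by (simp add: mult.assoc)
  moreover have "a / (u - l) * (e * (Fu - Fl)) = (a * e) * ((Fu - Fl) / (u - l))" by (simp add: mult.assoc)
  ultimately show ?thesis by simp
qed

context addis begin
interpretation prob_space M by (rule ps)

lemma At_alt: "h \<in> HS \<Longrightarrow> At h = {\<omega>\<in>space M. hist al la ta (\<lambda>j. P j \<omega>) (t-1) = h \<and> P t \<omega> \<le> cs ta h}"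
  unfolding At_def by (auto simp: LV_cs)

lemma At_meas[measurable]: "h \<in> HS \<Longrightarrow> At h \<in> sets M"
  unfolding At_alt using t1 by measurable

lemma int_le: "(\<integral>\<omega>. of_bool (P t \<omega> \<le> v) \<partial>M) = Fc v"
proof -
  have "(\<integral>\<omega>. of_bool (P t \<omega> \<le> v) \<partial>M) = (\<integral>\<omega>. indicator {\<omega>\<in>space M. P t \<omega> \<le> v} \<omega> \<partial>M)"
    by (rule Bochner_Integration.integral_cong) (auto simp: indicator_def)
  also have "\<dots> = measure M {\<omega>\<in>space M. P t \<omega> \<le> v}" by (simp add: Int_absorb2)
  finally show ?thesis by (simp add: Fc_def)
qed

lemma int_between:
  assumes "l \<le> u"
  shows "(\<integral>\<omega>. of_bool (l < P t \<omega> \<and> P t \<omega> \<le> u) \<partial>M) = Fc u - Fc l"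
proof -
  have [measurable]: "P t \<in> borel_measurable M" using t1 by simp
  have "(\<integral>\<omega>. of_bool (l < P t \<omega> \<and> P t \<omega> \<le> u) \<partial>M) = (\<integral>\<omega>. indicator ({\<omega>\<in>space M. P t \<omega> \<le> u} - {\<omega>\<in>space M. P t \<omega> \<le> l}) \<omega> \<partial>M)"
    by (rule Bochner_Integration.integral_cong) (auto simp: indicator_def)
  also have "\<dots> = measure M ({\<omega>\<in>space M. P t \<omega> \<le> u} - {\<omega>\<in>space M. P t \<omega> \<le> l})"
    by (simp add: Int_absorb2 Diff_subset[THEN subset_trans])
  also have "\<dots> = Fc u - Fc l" unfolding Fc_def
    by (rule finite_measure_Diff) (use assms in auto)
  finally show ?thesis .
qed

lemma Zpsi_int:
  assumes [measurable]: "\<psi> \<in> borel_measurable borel" "\<And>y. \<bar>\<psi> y\<bar> \<le> 1"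
  shows "integrable M (\<lambda>\<omega>. c * (Zv h v \<omega> * \<psi> (P t \<omega>)))"
proof -
  have [measurable]: "P t \<in> borel_measurable M" using t1 by simp
  have "integrable M (\<lambda>\<omega>. Zv h v \<omega> * \<psi> (P t \<omega>))"
  proof (rule integrable_const_bound[where B=1])
    show "AE x in M. norm (Zv h v x * \<psi> (P t x)) \<le> 1"
    proof (rule AE_I2)
      fix x
      have "\<bar>Zv h v x\<bar> * \<bar>\<psi> (P t x)\<bar> \<le> 1 * 1"
        using Zv_bnd[of h v x] assms(2)[of "P t x"] by (intro mult_mono) auto
      then show "norm (Zv h v x * \<psi> (P t x)) \<le> 1" by (simp add: abs_mult)
    qed
  qed simp
  then show ?thesis by (rule integrable_mult_right)
qed

lemma atom_ineq:
  assumes hH: "h \<in> HS"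
  shows "(\<integral>\<omega>. indicator (At h) \<omega> * f2 \<omega> \<partial>M) \<le> (\<integral>\<omega>. indicator (At h) \<omega> * f1 \<omega> \<partial>M)"
    "(\<integral>\<omega>. indicator (At h) \<omega> * f3 \<omega> \<partial>M) \<le> (\<integral>\<omega>. indicator (At h) \<omega> * f2 \<omega> \<partial>M)"
proof -
  note cp = cs_props[OF hH]
  define a where "a = cs al h"
  define l where "l = cs la h"
  define u where "u = cs ta h"
  have alu: "0 \<le> a" "a \<le> l" "0 \<le> l" "l < u" "u \<le> 1" using cp by (auto simp: a_def l_def u_def)
  note pwa = pw[OF hH, folded a_def l_def u_def]
  have AtM: "At h \<in> sets M" using hH by simp
  have m1: "(\<lambda>y. of_bool (l < y \<and> y \<le> u) :: real) \<in> borel_measurable borel" unfolding of_bool_def by measurable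
  have m2: "(\<lambda>y::real. of_bool (y \<le> v) :: real) \<in> borel_measurable borel" for v :: real
  proof -
    have "(\<lambda>y::real. of_bool (y \<le> v) :: real) = indicator {..v}" by (auto simp: indicator_def)
    then show ?thesis using borel_measurable_indicator[OF atMost_borel[of v]] by simp
  qed
  have EZ: "0 \<le> (\<integral>\<omega>. Zv h v \<omega> \<partial>M)" for v by (rule integral_nonneg_AE) (use Zv_bnd in auto)
  have i1: "(\<integral>\<omega>. indicator (At h) \<omega> * f1 \<omega> \<partial>M) = a / (u - l) * ((\<integral>\<omega>. Zv h u \<omega> \<partial>M) * (Fc u - Fc l))"
  proof -
    have "(\<integral>\<omega>. indicator (At h) \<omega> * f1 \<omega> \<partial>M) = (\<integral>\<omega>. a / (u - l) * (Zv h u \<omega> * of_bool (l < P t \<omega> \<and> P t \<omega> \<le> u)) \<partial>M)"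
      by (rule Bochner_Integration.integral_cong) (auto simp: pwa)
    also have "\<dots> = a / (u - l) * (\<integral>\<omega>. Zv h u \<omega> * of_bool (l < P t \<omega> \<and> P t \<omega> \<le> u) \<partial>M)" by simp
    also have "(\<integral>\<omega>. Zv h u \<omega> * of_bool (l < P t \<omega> \<and> P t \<omega> \<le> u) \<partial>M) = (\<integral>\<omega>. Zv h u \<omega> \<partial>M) * (Fc u - Fc l)"
      using Zv_indep[OF m1, where C=1 and h=h and v=u] int_between[of l u] alu by simp
    finally show ?thesis .
  qed
  have i2a: "(\<integral>\<omega>. indicator (At h) \<omega> * f2 \<omega> \<partial>M) \<le> a / u * ((\<integral>\<omega>. Zv h u \<omega> \<partial>M) * Fc u)"
  proof -
    have "(\<integral>\<omega>. indicator (At h) \<omega> * f2 \<omega> \<partial>M) \<le> (\<integral>\<omega>. a / u * (Zv h u \<omega> * of_bool (P t \<omega> \<le> u)) \<partial>M)"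
      apply (rule integral_mono)
        apply (rule ind_int[OF AtM f2_int])
       apply (rule Zpsi_int[OF m2]) apply simp
      apply (erule pwa(2))
      done
    also have "\<dots> = a / u * (\<integral>\<omega>. Zv h u \<omega> * of_bool (P t \<omega> \<le> u) \<partial>M)" by simp
    also have "(\<integral>\<omega>. Zv h u \<omega> * of_bool (P t \<omega> \<le> u) \<partial>M) = (\<integral>\<omega>. Zv h u \<omega> \<partial>M) * Fc u"
      using Zv_indep[OF m2[of u], where C=1 and h=h and v=u] int_le[of u] by simp
    finally show ?thesis .
  qed
  have i2b: "a / u * ((\<integral>\<omega>. Zv h 0 \<omega> \<partial>M) * Fc u) \<le> (\<integral>\<omega>. indicator (At h) \<omega> * f2 \<omega> \<partial>M)"
  proof -
    have "(\<integral>\<omega>. Zv h 0 \<omega> * of_bool (P t \<omega> \<le> u) \<partial>M) = (\<integral>\<omega>. Zv h 0 \<omega> \<partial>M) * Fc u"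
      using Zv_indep[OF m2[of u], where C=1 and h=h and v=0] int_le[of u] by simp
    then have "a / u * ((\<integral>\<omega>. Zv h 0 \<omega> \<partial>M) * Fc u) = (\<integral>\<omega>. a / u * (Zv h 0 \<omega> * of_bool (P t \<omega> \<le> u)) \<partial>M)"
      by simp
    also have "\<dots> \<le> (\<integral>\<omega>. indicator (At h) \<omega> * f2 \<omega> \<partial>M)"
      apply (rule integral_mono)
        apply (rule Zpsi_int[OF m2]) apply simp
       apply (rule ind_int[OF AtM f2_int])
      apply (erule pwa(3))
      done
    finally show ?thesis .
  qed
  have i3: "(\<integral>\<omega>. indicator (At h) \<omega> * f3 \<omega> \<partial>M) = (\<integral>\<omega>. Zv h 0 \<omega> \<partial>M) * Fc a"
  proof -
    have "(\<integral>\<omega>. indicator (At h) \<omega> * f3 \<omega> \<partial>M) = (\<integral>\<omega>. Zv h 0 \<omega> * of_bool (P t \<omega> \<le> a) \<partial>M)"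
      by (rule Bochner_Integration.integral_cong) (auto simp: pwa)
    also have "\<dots> = (\<integral>\<omega>. Zv h 0 \<omega> \<partial>M) * Fc a"
      using Zv_indep[OF m2[of a], where C=1 and h=h and v=0] int_le[of a] by simp
    finally show ?thesis .
  qed
  have Fl: "Fc l \<le> l / u * Fc u" by (rule Fc_ineq) (use alu in auto)
  have Fa: "Fc a \<le> a / u * Fc u" by (rule Fc_ineq) (use alu in auto)
  show "(\<integral>\<omega>. indicator (At h) \<omega> * f2 \<omega> \<partial>M) \<le> (\<integral>\<omega>. indicator (At h) \<omega> * f1 \<omega> \<partial>M)"
    using i2a arith1[OF alu(1) EZ[of u] alu(3) alu(4) Fl] unfolding i1 by linarith
  have "(\<integral>\<omega>. Zv h 0 \<omega> \<partial>M) * Fc a \<le> (\<integral>\<omega>. Zv h 0 \<omega> \<partial>M) * (a / u * Fc u)"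
    using Fa EZ[of 0] by (intro mult_left_mono) auto
  then show "(\<integral>\<omega>. indicator (At h) \<omega> * f3 \<omega> \<partial>M) \<le> (\<integral>\<omega>. indicator (At h) \<omega> * f2 \<omega> \<partial>M)"
    using i2b unfolding i3 by (simp add: algebra_simps)
qed

end



context addis begin
interpretation prob_space M by (rule ps)

definition E0 :: "'a \<Rightarrow> bool" where
  "E0 \<omega> = (P t \<omega> \<le> lev al la ta ta (\<lambda>j. P j \<omega>) t)"

definition Gm :: "'a measure" where
  "Gm = past_with M P al la ta t E0"

lemma E0_meas[measurable]: "E0 \<in> measurable M (count_space UNIV)"
proof -
  have "E0 = (\<lambda>\<omega>. (\<lambda>h \<omega>. P t \<omega> \<le> cs ta h) (hist al la ta (\<lambda>j. P j \<omega>) (t - 1)) \<omega>)"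
    by (rule ext) (simp add: E0_def lev_def cs_def)
  also have "\<dots> \<in> measurable M (count_space UNIV)"
    by (rule measurable_compose_countable'[where I=UNIV]) (use t1 in \<open>auto intro: countableI_type\<close>)
  finally show ?thesis .
qed

lemma At_E0: "At h = {\<omega>\<in>space M. hist al la ta (\<lambda>j. P j \<omega>) (t-1) = h \<and> E0 \<omega>}"
  by (simp add: At_def E0_def LV_def)

lemma decomp:
  fixes f :: "'a \<Rightarrow> real"
  assumes AG: "A \<in> sets Gm" and AE: "A \<subseteq> {\<omega>\<in>space M. E0 \<omega>}" and fi: "integrable M f"
  defines "H \<equiv> (\<lambda>\<omega>. hist al la ta (\<lambda>j. P j \<omega>) (t - 1)) ` A"
  shows "H \<subseteq> HS" "(\<integral>\<omega>. indicator A \<omega> * f \<omega> \<partial>M) = (\<Sum>h\<in>H. \<integral>\<omega>. indicator (At h) \<omega> * f \<omega> \<partial>M)"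
proof -
  show HH: "H \<subseteq> HS" unfolding H_def using hist_HS by auto
  have fin: "finite H" using HH HS_fin finite_subset by blast
  obtain B where B: "A = (\<lambda>\<omega>. (hist al la ta (\<lambda>j. P j \<omega>) (t - 1), E0 \<omega>)) -` B \<inter> space M"
    using AG past_sub(3)[OF E0_meas] unfolding Gm_def by auto
  have ind: "indicator A \<omega> = (\<Sum>h\<in>H. indicator (At h) \<omega> :: real)" if \<omega>: "\<omega> \<in> space M" for \<omega>
  proof -
    have "(\<Sum>h\<in>H. indicator (At h) \<omega> :: real) = (\<Sum>h\<in>H. if hist al la ta (\<lambda>j. P j \<omega>) (t - 1) = h then (of_bool (E0 \<omega>) :: real) else 0)"
      by (rule sum.cong) (auto simp: At_E0 indicator_def \<omega>)
    also have "\<dots> = (if hist al la ta (\<lambda>j. P j \<omega>) (t - 1) \<in> H then of_bool (E0 \<omega>) else 0)"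
      using fin by (simp add: sum.delta)
    also have "\<dots> = indicator A \<omega>"
    proof -
      have "\<omega> \<in> A \<longleftrightarrow> hist al la ta (\<lambda>j. P j \<omega>) (t - 1) \<in> H \<and> E0 \<omega>"
      proof
        assume "\<omega> \<in> A" then show "hist al la ta (\<lambda>j. P j \<omega>) (t - 1) \<in> H \<and> E0 \<omega>"
          using AE unfolding H_def by auto
      next
        assume "hist al la ta (\<lambda>j. P j \<omega>) (t - 1) \<in> H \<and> E0 \<omega>"
        then obtain \<omega>' where w': "\<omega>' \<in> A" "hist al la ta (\<lambda>j. P j \<omega>) (t - 1) = hist al la ta (\<lambda>j. P j \<omega>') (t - 1)" "E0 \<omega>"
          unfolding H_def by auto
        have "E0 \<omega>'" using w'(1) AE by auto
        then have "(hist al la ta (\<lambda>j. P j \<omega>) (t - 1), E0 \<omega>) \<in> B" using w' B by auto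
        then show "\<omega> \<in> A" using B \<omega> by auto
      qed
      then show ?thesis by (auto simp: indicator_def)
    qed
    finally show ?thesis by simp
  qed
  have "(\<integral>\<omega>. indicator A \<omega> * f \<omega> \<partial>M) = (\<integral>\<omega>. (\<Sum>h\<in>H. indicator (At h) \<omega> * f \<omega>) \<partial>M)"
  proof (rule Bochner_Integration.integral_cong)
    fix x assume x: "x \<in> space M"
    show "indicator A x * f x = (\<Sum>h\<in>H. indicator (At h) x * f x)"
      unfolding ind[OF x] by (simp add: sum_distrib_right)
  qed simp
  also have "\<dots> = (\<Sum>h\<in>H. \<integral>\<omega>. indicator (At h) \<omega> * f \<omega> \<partial>M)"
    by (rule Bochner_Integration.integral_sum[where f="\<lambda>h \<omega>. indicator (At h) \<omega> * f \<omega>"])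
       (use HH in \<open>auto intro!: ind_int fi\<close>)
  finally show "(\<integral>\<omega>. indicator A \<omega> * f \<omega> \<partial>M) = (\<Sum>h\<in>H. \<integral>\<omega>. indicator (At h) \<omega> * f \<omega> \<partial>M)" .
qed

lemma main:
  "AE \<omega> in M. E0 \<omega> \<longrightarrow> (real_cond_exp M Gm f2 \<omega> \<le> real_cond_exp M Gm f1 \<omega> \<and> real_cond_exp M Gm f3 \<omega> \<le> real_cond_exp M Gm f2 \<omega>)"
proof -
  note PS = past_sub[OF E0_meas, folded Gm_def]
  have c1: "AE x in M. x \<in> {\<omega>\<in>space M. E0 \<omega>} \<longrightarrow> real_cond_exp M Gm f2 x \<le> real_cond_exp M Gm f1 x"
  proof (rule cexp_compare[OF ps PS(1) PS(2) f1_int f2_int])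
    fix A assume A: "A \<in> sets Gm" "A \<subseteq> {\<omega>\<in>space M. E0 \<omega>}"
    note d1 = decomp[OF A f1_int] and d2 = decomp[OF A f2_int]
    show "(\<integral>x. indicator A x * f2 x \<partial>M) \<le> (\<integral>x. indicator A x * f1 x \<partial>M)"
      unfolding d1(2) d2(2) by (rule sum_mono) (use d1(1) atom_ineq(1) in blast)
  qed
  have c2: "AE x in M. x \<in> {\<omega>\<in>space M. E0 \<omega>} \<longrightarrow> real_cond_exp M Gm f3 x \<le> real_cond_exp M Gm f2 x"
  proof (rule cexp_compare[OF ps PS(1) PS(2) f2_int f3_int])
    fix A assume A: "A \<in> sets Gm" "A \<subseteq> {\<omega>\<in>space M. E0 \<omega>}"
    note d2 = decomp[OF A f2_int] and d3 = decomp[OF A f3_int]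
    show "(\<integral>x. indicator A x * f3 x \<partial>M) \<le> (\<integral>x. indicator A x * f2 x \<partial>M)"
      unfolding d3(2) d2(2) by (rule sum_mono) (use d2(1) atom_ineq(2) in blast)
  qed
  show ?thesis using c1 c2 AE_space by eventually_elim auto
qed

end

theorem lemma2:
  fixes M :: "'a measure" and P :: "nat \<Rightarrow> 'a \<Rightarrow> real"
    and al la ta :: level_fn and g :: "bool list \<Rightarrow> real"
    and H0 :: "nat set" and T t :: nat
  assumes "prob_space M"
    and indep: "prob_space.indep_vars M (\<lambda>_. borel) P {1..}"
    and pval: "\<And>j \<omega>. j \<ge> 1 \<Longrightarrow> \<omega> \<in> space M \<Longrightarrow> P j \<omega> \<in> {0..1}"
    and g_mono: "\<And>r r'. length r = T \<Longrightarrow> list_all2 (\<le>) r r' \<Longrightarrow> g r \<le> g r'"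
    and mono_al: "\<And>s. s \<ge> 1 \<Longrightarrow> mono_past al s"
    and mono_la: "\<And>s. s \<ge> 1 \<Longrightarrow> mono_past la s"
    and mono_ta: "\<And>s. s \<ge> 1 \<Longrightarrow> mono_past (\<lambda>k r c s. 1 - ta k r c s) s"
    and range: "\<And>s r c q. s \<ge> 1 \<Longrightarrow> length r = s - 1 \<Longrightarrow> length c = s - 1 \<Longrightarrow> length q = s - 1 \<Longrightarrow>
                  al s r c q \<in> {0..1} \<and> la s r c q \<in> {0..1} \<and> ta s r c q \<in> {0..1}"
    and order: "\<And>s r c q. s \<ge> 1 \<Longrightarrow> length r = s - 1 \<Longrightarrow> length c = s - 1 \<Longrightarrow> length q = s - 1 \<Longrightarrow>
                  al s r c q \<le> la s r c q \<and> la s r c q < ta s r c q"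
    and t: "1 \<le> t" "t \<le> T" "t \<in> H0"
    and cuc: "cond_unif_conservative M P al la ta t"
  shows "AE \<omega> in M. P t \<omega> \<le> lev al la ta ta (\<lambda>j. P j \<omega>) t \<longrightarrow>
     (let G = past_with M P al la ta t (\<lambda>\<omega>. P t \<omega> \<le> lev al la ta ta (\<lambda>j. P j \<omega>) t);
          A = (\<lambda>\<omega>. lev al la ta al (\<lambda>j. P j \<omega>) t);
          L = (\<lambda>\<omega>. lev al la ta la (\<lambda>j. P j \<omega>) t);
          U = (\<lambda>\<omega>. lev al la ta ta (\<lambda>j. P j \<omega>) t);
          D = (\<lambda>\<omega>. max (g (fst (hist al la ta (\<lambda>j. P j \<omega>) T))) 1)
      in real_cond_exp M G (\<lambda>\<omega>. A \<omega> * of_bool (L \<omega> < P t \<omega> \<and> P t \<omega> \<le> U \<omega>)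
                                   / ((U \<omega> - L \<omega>) * D \<omega>)) \<omega>
           \<ge> real_cond_exp M G (\<lambda>\<omega>. A \<omega> / (U \<omega> * D \<omega>)) \<omega>
       \<and> real_cond_exp M G (\<lambda>\<omega>. A \<omega> / (U \<omega> * D \<omega>)) \<omega>
           \<ge> real_cond_exp M G (\<lambda>\<omega>. of_bool (P t \<omega> \<le> A \<omega>) / D \<omega>) \<omega>)"
proof -
  interpret A: addis M P al la ta g T t
    by (rule addis.intro[OF assms(1) indep pval g_mono mono_al mono_la mono_ta range order t(1) t(2) cuc])
  show ?thesis
    using A.main unfolding A.Gm_def A.E0_def[abs_def] A.f1_def[abs_def] A.f2_def[abs_def] A.f3_def[abs_def]
      A.LV_def A.Dfun_def Let_def
    by simp
qed

end
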